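(* With $n=2p+1$ agents and complete information, the RC mechanism with abstention subgame perfect implements the majority rule: for every preference profile $R$, every subgame-perfect equilibrium yields the outcome $Maj(R)$, and some subgame-perfect equilibrium yields $Maj(R)$.
   Context: Agents $I=\{1,\dots,n\}$, $n=2p+1$, options $A=\{a,b\}$, strict preferences over $A$, commonly known. Majority rule: $Maj(R)=a$ if at least $p+1$ agents prefer $a$, else $b$. Lotteries are compared by stochastic dominance (an agent preferring $x$ weakly (strictly) prefers $\beta$ to $\eta$ iff $\beta(x)\ge\eta(x)$ ($>$)). RC mechanism with abstention: Voting stage: each agent simultaneously chooses $v_i\in\{a,b,\mathrm{abs}\}$; the profile $v$ is publicly announced. If $a$ and $b$ receive equally many votes (including the case where everyone abstains), the outcome is the lottery giving probability $1/2$ to each option. Otherwise the option with more votes is the Voting-stage winner, and a Confirmation stage follows: $p+1$ agents are drawn uniformly at random from all agents and ordered uniformly, $\pi_1,\dots,\pi_{p+1}$; sequentially, as long as nobody has announced $Y$, agent $\pi_t$ announces $Y$, $N$, or abstains. If some agent announces $Y$, the outcome is the Voting-stage winner; if all announce $N$ or abstain, the outcome is the lottery $\beta(v)$ with $\beta_a(v)=|\{i:v_i=a\}|/(|\{i:v_i=a\}|+|\{i:v_i=b\}|)$, $\beta_b(v)=1-\beta_a(v)$. *)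

theory Defs
  imports Complex_Main
begin

datatype opt = OA | OB
datatype vote = V opt | Abst
datatype ann = Yes | No | AbsC

(* Agents are 0..<n with n = 2p+1.  Lotteries over {a,b} are represented by
   the probability assigned to a. *)

definition na :: "nat \<Rightarrow> (nat \<Rightarrow> vote) \<Rightarrow> nat" where
  "na n v = card {i \<in> {0..<n}. v i = V OA}"

definition nb :: "nat \<Rightarrow> (nat \<Rightarrow> vote) \<Rightarrow> nat" where
  "nb n v = card {i \<in> {0..<n}. v i = V OB}"

definition tie :: "nat \<Rightarrow> (nat \<Rightarrow> vote) \<Rightarrow> bool" where
  "tie n v \<longleftrightarrow> na n v = nb n v"

definition beta_a :: "nat \<Rightarrow> (nat \<Rightarrow> vote) \<Rightarrow> real" where
  "beta_a n v = real (na n v) / real (na n v + nb n v)"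

definition winA :: "nat \<Rightarrow> (nat \<Rightarrow> vote) \<Rightarrow> real" where
  "winA n v = (if na n v > nb n v then 1 else 0)"

(* Confirmation-stage strategy profile: agent i's announcement when drawn,
   given the public voting profile v and the history h of previously drawn
   agents together with their (non-Y) announcements. *)
type_synonym cstrat = "nat \<Rightarrow> (nat \<Rightarrow> vote) \<Rightarrow> (nat \<times> ann) list \<Rightarrow> ann"

(* Probability of outcome a in the Confirmation stage, starting at the chance
   node after history h with k draws still to be made.  The ordered uniform
   draw of p+1 agents is realised by successive uniform draws without
   replacement. *)
fun cv :: "nat \<Rightarrow> nat \<Rightarrow> cstrat \<Rightarrow> (nat \<Rightarrow> vote) \<Rightarrow> (nat \<times> ann) list \<Rightarrow> real" where
  "cv n 0 sc v h = beta_a n v"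
| "cv n (Suc k) sc v h =
     (\<Sum>j \<in> {0..<n} - set (map fst h).
         (if sc j v h = Yes then winA n v else cv n k sc v (h @ [(j, sc j v h)])))
     / real (card ({0..<n} - set (map fst h)))"

(* Probability of a at the decision node where agent j has been drawn after
   history h, with k further draws remaining after j *)
definition dv :: "nat \<Rightarrow> nat \<Rightarrow> cstrat \<Rightarrow> (nat \<Rightarrow> vote) \<Rightarrow> (nat \<times> ann) list \<Rightarrow> nat \<Rightarrow> real" where
  "dv n k sc v h j = (if sc j v h = Yes then winA n v else cv n k sc v (h @ [(j, sc j v h)]))"

(* Confirmation histories that can occur: distinct agents, none announced Y,
   at most p of them (otherwise the stage is over) *)
definition valid_hist :: "nat \<Rightarrow> (nat \<times> ann) list \<Rightarrow> bool" where
  "valid_hist p h \<longleftrightarrow> distinct (map fst h) \<and> set (map fst h) \<subseteq> {0..<2*p+1}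
      \<and> (\<forall>x \<in> set h. snd x \<noteq> Yes) \<and> length h \<le> p"

definition outcome :: "nat \<Rightarrow> (nat \<Rightarrow> vote) \<Rightarrow> cstrat \<Rightarrow> real" where
  "outcome p sv sc = (if tie (2*p+1) sv then 1/2 else cv (2*p+1) (p+1) sc sv [])"

(* With two options, stochastic dominance for an agent preferring x compares
   the probabilities of x; util gives that probability. *)
definition util :: "(nat \<Rightarrow> opt) \<Rightarrow> nat \<Rightarrow> real \<Rightarrow> real" where
  "util R i q = (if R i = OA then q else 1 - q)"

(* Subgames: the whole game, every
   chance node of the Confirmation stage, every decision node of it. *)
definition SPE :: "nat \<Rightarrow> (nat \<Rightarrow> opt) \<Rightarrow> (nat \<Rightarrow> vote) \<Rightarrow> cstrat \<Rightarrow> bool" where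
  "SPE p R sv sc \<longleftrightarrow>
     (\<forall>i < 2*p+1. \<forall>x sc'.
        \<not> util R i (outcome p (sv(i := x)) (sc(i := sc'))) > util R i (outcome p sv sc))
   \<and> (\<forall>v h i sc'. \<not> tie (2*p+1) v \<longrightarrow> valid_hist p h \<longrightarrow> i < 2*p+1 \<longrightarrow>
        \<not> util R i (cv (2*p+1) (p + 1 - length h) (sc(i := sc')) v h)
            > util R i (cv (2*p+1) (p + 1 - length h) sc v h))
   \<and> (\<forall>v h j i sc'. \<not> tie (2*p+1) v \<longrightarrow> valid_hist p h \<longrightarrow> j < 2*p+1 \<longrightarrow>
        j \<notin> set (map fst h) \<longrightarrow> i < 2*p+1 \<longrightarrow>
        \<not> util R i (dv (2*p+1) (p - length h) (sc(i := sc')) v h j)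
            > util R i (dv (2*p+1) (p - length h) sc v h j))"

definition Maj :: "nat \<Rightarrow> (nat \<Rightarrow> opt) \<Rightarrow> opt" where
  "Maj p R = (if card {i \<in> {0..<2*p+1}. R i = OA} \<ge> p + 1 then OA else OB)"

definition deg :: "opt \<Rightarrow> real" where
  "deg x = (if x = OA then 1 else 0)"

end

theory Submission
  imports Defs
begin

fun oth :: "opt \<Rightarrow> opt" where "oth OA = OB" | "oth OB = OA"

definition cnt :: "nat \<Rightarrow> opt \<Rightarrow> (nat \<Rightarrow> vote) \<Rightarrow> nat" where
  "cnt n x v = card {i \<in> {0..<n}. v i = V x}"

definition win :: "nat \<Rightarrow> (nat \<Rightarrow> vote) \<Rightarrow> opt" where
  "win n v = (if nb n v < na n v then OA else OB)"

lemma na_cnt: "na n v = cnt n OA v" and nb_cnt: "nb n v = cnt n OB v"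
  by (simp_all add: na_def nb_def cnt_def)

lemma winA_deg: "winA n v = deg (win n v)"
  by (simp add: winA_def deg_def win_def)

lemma beta_bounds: "0 \<le> beta_a n v" "beta_a n v \<le> 1"
  by (auto simp: beta_a_def divide_le_eq_1)

lemma winA_bounds: "0 \<le> winA n v" "winA n v \<le> 1"
  by (auto simp: winA_def)

lemma avg_bounds:
  assumes "finite S" "\<And>j. j \<in> S \<Longrightarrow> 0 \<le> t j \<and> t j \<le> 1"
  shows "0 \<le> (\<Sum>j\<in>S. t j) / real (card S) \<and> (\<Sum>j\<in>S. t j) / real (card S) \<le> 1"
proof -
  have "(\<Sum>j\<in>S. t j) \<le> (\<Sum>j\<in>S. 1)" by (rule sum_mono) (use assms in auto)
  moreover have "0 \<le> (\<Sum>j\<in>S. t j)" by (rule sum_nonneg) (use assms in auto)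
  ultimately show ?thesis
    by (cases "card S = 0") (auto simp: divide_le_eq_1)
qed

lemma cv_bounds: "0 \<le> cv n k sc v h \<and> cv n k sc v h \<le> 1"
proof (induction k arbitrary: h)
  case 0 then show ?case using beta_bounds by simp
next
  case (Suc k)
  show ?case unfolding cv.simps
    by (rule avg_bounds) (use Suc winA_bounds in auto)
qed

lemma dv_bounds: "0 \<le> dv n k sc v h j \<and> dv n k sc v h j \<le> 1"
  using cv_bounds winA_bounds by (simp add: dv_def)

lemma cv_Suc_dv: "cv n (Suc k) sc v h =
   (\<Sum>j \<in> {0..<n} - set (map fst h). dv n k sc v h j) / real (card ({0..<n} - set (map fst h)))"
  by (simp add: dv_def)

fun F :: "(nat \<Rightarrow> opt) \<Rightarrow> opt \<Rightarrow> real \<Rightarrow> real \<Rightarrow> nat \<Rightarrow> nat set \<Rightarrow> real" where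
  "F R w x y 0 S = y"
| "F R w x y (Suc k) S = (\<Sum>j\<in>S. if R j = w then x else F R w x y k (S - {j})) / real (card S)"

lemma F_bounds: "0 \<le> x \<Longrightarrow> x \<le> 1 \<Longrightarrow> 0 \<le> y \<Longrightarrow> y \<le> 1 \<Longrightarrow> finite S \<Longrightarrow>
   0 \<le> F R w x y k S \<and> F R w x y k S \<le> 1"
proof (induction k arbitrary: S)
  case 0 then show ?case by simp
next
  case (Suc k)
  show ?case unfolding F.simps
    by (rule avg_bounds) (use Suc in auto)
qed

lemma F_affine: "F R w x y k S = x * F R w 1 0 k S + y * F R w 0 1 k S"
proof (induction k arbitrary: S)
  case 0 then show ?case by simp
next
  case (Suc k)
  have "(\<Sum>j\<in>S. if R j = w then x else F R w x y k (S - {j}))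
     = (\<Sum>j\<in>S. x * (if R j = w then 1 else F R w 1 0 k (S - {j})) + y * (if R j = w then 0 else F R w 0 1 k (S - {j})))"
    by (rule sum.cong) (auto simp: Suc)
  also have "\<dots> = x * (\<Sum>j\<in>S. (if R j = w then 1 else F R w 1 0 k (S - {j}))) + y * (\<Sum>j\<in>S. (if R j = w then 0 else F R w 0 1 k (S - {j})))"
    by (simp add: sum.distrib sum_distrib_left)
  finally show ?case by (simp add: add_divide_distrib)
qed

lemma F_const: "finite S \<Longrightarrow> k \<le> card S \<Longrightarrow> F R w c c k S = c"
proof (induction k arbitrary: S)
  case 0 then show ?case by simp
next
  case (Suc k)
  have "(\<Sum>j\<in>S. if R j = w then c else F R w c c k (S - {j})) = (\<Sum>j\<in>S. c)"
    by (rule sum.cong) (use Suc in auto)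
  moreover have "card S > 0" using Suc.prems by simp
  ultimately show ?case by simp
qed

lemma F_forced: "finite S \<Longrightarrow> k \<le> card S \<Longrightarrow> card {j\<in>S. R j \<noteq> w} < k \<Longrightarrow> F R w x y k S = x"
proof (induction k arbitrary: S)
  case 0 then show ?case by simp
next
  case (Suc k)
  have "(\<Sum>j\<in>S. if R j = w then x else F R w x y k (S - {j})) = (\<Sum>j\<in>S. x)"
  proof (rule sum.cong[OF refl])
    fix j assume j: "j \<in> S"
    show "(if R j = w then x else F R w x y k (S - {j})) = x"
    proof (cases "R j = w")
      case False
      have e: "{i\<in>S - {j}. R i \<noteq> w} = {i\<in>S. R i \<noteq> w} - {j}" by blast
      have mem: "j \<in> {i\<in>S. R i \<noteq> w}" using j False by blast
      have fin: "finite {i\<in>S. R i \<noteq> w}" using Suc.prems(1) by simp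
      have c0: "card ({i\<in>S. R i \<noteq> w} - {j}) = card {i\<in>S. R i \<noteq> w} - 1"
        by (rule card_Diff_singleton[OF mem])
      have c1: "card {i\<in>S. R i \<noteq> w} > 0" using mem fin card_gt_0_iff by blast
      have c2: "card (S - {j}) = card S - 1" by (rule card_Diff_singleton[OF j])
      have k1: "card {i\<in>S - {j}. R i \<noteq> w} < k" unfolding e c0 using c1 Suc.prems(3) by arith
      have k2: "k \<le> card (S - {j})" unfolding c2 using Suc.prems(2) by arith
      have "F R w x y k (S - {j}) = x"
        by (rule Suc.IH) (use Suc.prems(1) k1 k2 in auto)
      then show ?thesis by simp
    qed simp
  qed
  moreover have "card S > 0" using Suc.prems by simp
  ultimately show ?case by simp
qed

lemma F_pos: "finite S \<Longrightarrow> k \<le> card {j\<in>S. R j \<noteq> w} \<Longrightarrow> 0 < F R w 0 1 k S"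
proof (induction k arbitrary: S)
  case 0 then show ?case by simp
next
  case (Suc k)
  have ne: "{j\<in>S. R j \<noteq> w} \<noteq> {}"
  proof
    assume E: "{j\<in>S. R j \<noteq> w} = {}"
    have "card {j\<in>S. R j \<noteq> w} = 0" unfolding E by simp
    then show False using Suc.prems(2) by simp
  qed
  then obtain j0 where j0: "j0 \<in> S" "R j0 \<noteq> w" by blast
  have e: "{i\<in>S - {j0}. R i \<noteq> w} = {i\<in>S. R i \<noteq> w} - {j0}" by blast
  have mem: "j0 \<in> {i\<in>S. R i \<noteq> w}" using j0 by blast
  have c0: "card ({i\<in>S. R i \<noteq> w} - {j0}) = card {i\<in>S. R i \<noteq> w} - 1"
    by (rule card_Diff_singleton[OF mem])
  have k1: "k \<le> card {i\<in>S - {j0}. R i \<noteq> w}" unfolding e c0 using Suc.prems(2) by arith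
  have pos: "0 < F R w 0 1 k (S - {j0})" by (rule Suc.IH) (use Suc.prems(1) k1 in auto)
  have nn: "\<forall>j\<in>S. 0 \<le> (if R j = w then 0 else F R w 0 1 k (S - {j}))"
  proof
    fix j assume "j \<in> S"
    have "0 \<le> F R w 0 1 k (S - {j})" using F_bounds[of 0 1 "S - {j}" R w k] Suc.prems(1) by simp
    then show "0 \<le> (if R j = w then 0 else F R w 0 1 k (S - {j}))" by simp
  qed
  have "0 < (\<Sum>j\<in>S. if R j = w then 0 else F R w 0 1 k (S - {j}))"
    by (rule sum_pos2[OF Suc.prems(1) j0(1)]) (use pos j0 nn in auto)
  moreover have "card S > 0" using j0 Suc.prems(1) card_gt_0_iff by blast
  ultimately show ?case by simp
qed

lemma cv_upd_hist: "i \<in> set (map fst h) \<Longrightarrow> cv n k (sc(i:=f)) v h = cv n k sc v h"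
proof (induction k arbitrary: h)
  case 0 then show ?case by simp
next
  case (Suc k)
  have "(\<Sum>j \<in> {0..<n} - set (map fst h).
         (if (sc(i:=f)) j v h = Yes then winA n v else cv n k (sc(i:=f)) v (h @ [(j, (sc(i:=f)) j v h)])))
      = (\<Sum>j \<in> {0..<n} - set (map fst h).
         (if sc j v h = Yes then winA n v else cv n k sc v (h @ [(j, sc j v h)])))"
  proof (rule sum.cong[OF refl])
    fix j assume j: "j \<in> {0..<n} - set (map fst h)"
    hence "j \<noteq> i" using Suc.prems by auto
    hence e: "(sc(i:=f)) j = sc j" by simp
    have "cv n k (sc(i:=f)) v (h @ [(j, sc j v h)]) = cv n k sc v (h @ [(j, sc j v h)])"
      by (rule Suc.IH) (use Suc.prems in simp)
    then show "(if (sc(i:=f)) j v h = Yes then winA n v else cv n k (sc(i:=f)) v (h @ [(j, (sc(i:=f)) j v h)]))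
      = (if sc j v h = Yes then winA n v else cv n k sc v (h @ [(j, sc j v h)]))"
      by (simp only: e)
  qed
  then show ?case by (simp only: cv.simps)
qed

lemma util_deg_same: "util R i (deg (R i)) = 1"
  by (cases "R i") (auto simp: util_def deg_def)
lemma util_deg_other: "R i \<noteq> w \<Longrightarrow> util R i (deg w) = 0"
  by (cases "R i"; cases w) (auto simp: util_def deg_def)
lemma util_bounds: "0 \<le> x \<Longrightarrow> x \<le> 1 \<Longrightarrow> 0 \<le> util R i x \<and> util R i x \<le> 1"
  by (auto simp: util_def)
lemma util_eq1: "util R i x = 1 \<Longrightarrow> x = deg (R i)"
  by (cases "R i") (auto simp: util_def deg_def)
lemma util_eq0: "R i \<noteq> w \<Longrightarrow> util R i x = 0 \<Longrightarrow> x = deg w"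
  by (cases "R i"; cases w) (auto simp: util_def deg_def)

definition C3 :: "nat \<Rightarrow> (nat \<Rightarrow> opt) \<Rightarrow> cstrat \<Rightarrow> bool" where
  "C3 p R sc \<longleftrightarrow> (\<forall>v h j i sc'. \<not> tie (2*p+1) v \<longrightarrow> valid_hist p h \<longrightarrow> j < 2*p+1 \<longrightarrow>
        j \<notin> set (map fst h) \<longrightarrow> i < 2*p+1 \<longrightarrow>
        \<not> util R i (dv (2*p+1) (p - length h) (sc(i := sc')) v h j)
            > util R i (dv (2*p+1) (p - length h) sc v h j))"

lemma C3D:
  assumes "C3 p R sc" "\<not> tie (2*p+1) v" "valid_hist p h" "j < 2*p+1" "j \<notin> set (map fst h)" "i < 2*p+1"
  shows "\<not> util R i (dv (2*p+1) (p - length h) (sc(i := sc')) v h j) > util R i (dv (2*p+1) (p - length h) sc v h j)"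
  using assms(1) unfolding C3_def
  apply -
  apply (erule allE[where x=v])
  apply (erule allE[where x=h])
  apply (erule allE[where x=j])
  apply (erule allE[where x=i])
  apply (erule allE[where x=sc'])
  using assms(2-) by simp

lemma pool_snoc: "{0..<n} - set (map fst (h @ [(j, a)])) = ({0..<n} - set (map fst h)) - {j}"
  by auto

lemma cv_SPE:
  assumes c3: "C3 p R sc" and nt: "\<not> tie (2*p+1) v"
  shows "distinct (map fst h) \<Longrightarrow> set (map fst h) \<subseteq> {0..<2*p+1} \<Longrightarrow> (\<forall>x\<in>set h. snd x \<noteq> Yes)
    \<Longrightarrow> length h + k = p+1 \<Longrightarrow>
    cv (2*p+1) k sc v h = F R (win (2*p+1) v) (winA (2*p+1) v) (beta_a (2*p+1) v) k ({0..<2*p+1} - set (map fst h))"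
proof (induction k arbitrary: h)
  case 0 then show ?case by simp
next
  case (Suc k)
  let ?n = "2*p+1"
  let ?P = "{0..<?n} - set (map fst h)"
  let ?F = "\<lambda>S. F R (win ?n v) (winA ?n v) (beta_a ?n v) k S"
  have vh: "valid_hist p h" using Suc.prems by (auto simp: valid_hist_def)
  have pk: "p - length h = k" using Suc.prems by simp
  have tm: "dv ?n k sc v h j = (if R j = win ?n v then winA ?n v else ?F (?P - {j}))" if j: "j \<in> ?P" for j
  proof -
    have jn: "j < ?n" "j \<notin> set (map fst h)" using j by auto
    have IHn: "cv ?n k sc v (h @ [(j, a)]) = ?F (?P - {j})" if "a \<noteq> Yes" for a
    proof -
      have "cv ?n k sc v (h @ [(j, a)]) = ?F ({0..<?n} - set (map fst (h @ [(j, a)])))"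
        by (rule Suc.IH) (use Suc.prems jn that in auto)
      then show ?thesis by (simp only: pool_snoc)
    qed
    have Fb: "0 \<le> ?F S \<and> ?F S \<le> 1" if "finite S" for S
      by (rule F_bounds) (simp_all add: winA_bounds beta_bounds that)
    have dY: "dv ?n k (sc(j := (\<lambda>_ _. Yes))) v h j = winA ?n v" by (simp add: dv_def)
    have dN: "dv ?n k (sc(j := (\<lambda>_ _. No))) v h j = ?F (?P - {j})"
      using IHn[of No] cv_upd_hist[of j "h @ [(j, No)]"] by (simp add: dv_def)
    have c3': "\<not> util R j (dv ?n k (sc(j:=sc')) v h j) > util R j (dv ?n k sc v h j)" for sc'
      using C3D[OF c3 nt vh jn(1,2) jn(1), of sc'] unfolding pk .
    have c1: "\<not> util R j (winA ?n v) > util R j (dv ?n k sc v h j)"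
      using c3'[of "\<lambda>_ _. Yes"] unfolding dY .
    have c2: "\<not> util R j (?F (?P - {j})) > util R j (dv ?n k sc v h j)"
      using c3'[of "\<lambda>_ _. No"] unfolding dN .
    have db: "0 \<le> dv ?n k sc v h j \<and> dv ?n k sc v h j \<le> 1" by (rule dv_bounds)
    show ?thesis
    proof (cases "R j = win ?n v")
      case True
      then have "util R j (winA ?n v) = 1" using util_deg_same winA_deg by metis
      with c1 db util_bounds have "util R j (dv ?n k sc v h j) = 1" by (smt (verit))
      then have "dv ?n k sc v h j = deg (R j)" by (rule util_eq1)
      then show ?thesis using True winA_deg by simp
    next
      case False
      show ?thesis
      proof (cases "sc j v h = Yes")
        case True
        have u0: "util R j (winA ?n v) = 0" using util_deg_other[of R j "win ?n v"] False winA_deg by metis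
        have "dv ?n k sc v h j = winA ?n v" using True by (simp add: dv_def)
        with c2 u0 have "util R j (?F (?P - {j})) \<le> 0" by simp
        moreover have "0 \<le> util R j (?F (?P - {j}))" using Fb[of "?P - {j}"] util_bounds by auto
        ultimately have "?F (?P - {j}) = deg (win ?n v)" using util_eq0[of R j "win ?n v"] False by simp
        then show ?thesis using False \<open>dv ?n k sc v h j = winA ?n v\<close> winA_deg by simp
      next
        case nY: False
        then show ?thesis using False IHn[of "sc j v h"] by (simp add: dv_def)
      qed
    qed
  qed
  have "(\<Sum>j\<in>?P. dv ?n k sc v h j) = (\<Sum>j\<in>?P. if R j = win ?n v then winA ?n v else ?F (?P - {j}))"
    by (rule sum.cong[OF refl]) (rule tm)
  then show ?case unfolding cv_Suc_dv F.simps by simp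
qed

definition sc0 :: "(nat \<Rightarrow> opt) \<Rightarrow> nat \<Rightarrow> cstrat" where
  "sc0 R n j v h = (if R j = win n v then Yes else No)"

lemma cv_sc0_hist: "map fst h = map fst h' \<Longrightarrow> cv n k (sc0 R n) v h = cv n k (sc0 R n) v h'"
proof (induction k arbitrary: h h')
  case 0 then show ?case by simp
next
  case (Suc k)
  have A: "(if sc0 R n j v h = Yes then winA n v else cv n k (sc0 R n) v (h @ [(j, sc0 R n j v h)]))
     = (if sc0 R n j v h' = Yes then winA n v else cv n k (sc0 R n) v (h' @ [(j, sc0 R n j v h')]))" for j
  proof -
    have "cv n k (sc0 R n) v (h @ [(j, a)]) = cv n k (sc0 R n) v (h' @ [(j, a)])" for a
      using Suc by (intro Suc.IH) simp
    moreover have "sc0 R n j v h = sc0 R n j v h'" by (simp add: sc0_def)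
    ultimately show ?thesis by simp
  qed
  show ?case by (simp only: cv.simps A) (use Suc.prems in simp)
qed

definition sg :: "(nat \<Rightarrow> opt) \<Rightarrow> nat \<Rightarrow> real" where
  "sg R i = (if R i = OA then 1 else -1)"

lemma util_sg: "util R i x \<le> util R i y \<longleftrightarrow> sg R i * x \<le> sg R i * y"
  by (auto simp: util_def sg_def)
lemma sg_top: "0 \<le> x \<Longrightarrow> x \<le> 1 \<Longrightarrow> sg R i * x \<le> sg R i * deg (R i)"
  by (cases "R i") (auto simp: sg_def deg_def)
lemma sg_bot: "R i \<noteq> w \<Longrightarrow> 0 \<le> x \<Longrightarrow> x \<le> 1 \<Longrightarrow> sg R i * deg w \<le> sg R i * x"
  by (cases "R i"; cases w) (auto simp: sg_def deg_def)

lemma dv_step: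
  assumes hyp: "\<And>h. sg R i * cv n k ((sc0 R n)(i := f)) v h \<le> sg R i * cv n k (sc0 R n) v h"
  shows "sg R i * dv n k ((sc0 R n)(i := f)) v h j \<le> sg R i * dv n k (sc0 R n) v h j"
proof (cases "j = i")
  case False
  then have e: "((sc0 R n)(i := f)) j = sc0 R n j" by simp
  show ?thesis unfolding dv_def e using hyp[of "h @ [(j, sc0 R n j v h)]"] by simp
next
  case True
  show ?thesis
  proof (cases "R i = win n v")
    case w: True
    have "dv n k (sc0 R n) v h j = deg (R i)" using True w by (simp add: dv_def sc0_def winA_deg)
    moreover have "sg R i * dv n k ((sc0 R n)(i := f)) v h j \<le> sg R i * deg (R i)"
      by (rule sg_top) (use dv_bounds in auto)
    ultimately show ?thesis by simp
  next
    case w: False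
    have e: "dv n k (sc0 R n) v h j = cv n k (sc0 R n) v (h @ [(i, No)])"
      using True w by (simp add: dv_def sc0_def)
    show ?thesis
    proof (cases "f v h = Yes")
      case True
      then have "dv n k ((sc0 R n)(i := f)) v h j = deg (win n v)"
        using \<open>j = i\<close> by (simp add: dv_def winA_deg)
      moreover have "sg R i * deg (win n v) \<le> sg R i * cv n k (sc0 R n) v (h @ [(i, No)])"
        by (rule sg_bot[of R i "win n v"]) (use w cv_bounds in auto)
      ultimately show ?thesis using e by simp
    next
      case False
      then have e2: "dv n k ((sc0 R n)(i := f)) v h j = cv n k ((sc0 R n)(i := f)) v (h @ [(i, f v h)])"
        using \<open>j = i\<close> by (simp add: dv_def)
      have e3: "cv n k (sc0 R n) v (h @ [(i, f v h)]) = cv n k (sc0 R n) v (h @ [(i, No)])"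
        by (rule cv_sc0_hist) simp
      have "sg R i * cv n k ((sc0 R n)(i := f)) v (h @ [(i, f v h)]) \<le> sg R i * cv n k (sc0 R n) v (h @ [(i, f v h)])"
        by (rule hyp)
      then show ?thesis unfolding e e2 e3 .
    qed
  qed
qed

lemma dev_cv: "sg R i * cv n k ((sc0 R n)(i := f)) v h \<le> sg R i * cv n k (sc0 R n) v h"
proof (induction k arbitrary: h)
  case 0 then show ?case by simp
next
  case (Suc k)
  let ?P = "{0..<n} - set (map fst h)"
  have "(\<Sum>j\<in>?P. sg R i * dv n k ((sc0 R n)(i := f)) v h j) \<le> (\<Sum>j\<in>?P. sg R i * dv n k (sc0 R n) v h j)"
    by (rule sum_mono) (rule dv_step[OF Suc.IH])
  then have "sg R i * (\<Sum>j\<in>?P. dv n k ((sc0 R n)(i := f)) v h j) \<le> sg R i * (\<Sum>j\<in>?P. dv n k (sc0 R n) v h j)"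
    by (simp add: sum_distrib_left)
  then have "sg R i * (\<Sum>j\<in>?P. dv n k ((sc0 R n)(i := f)) v h j) / real (card ?P) \<le> sg R i * (\<Sum>j\<in>?P. dv n k (sc0 R n) v h j) / real (card ?P)"
    by (rule divide_right_mono) simp
  then show ?case unfolding cv_Suc_dv by simp
qed

lemma dev_dv: "sg R i * dv n k ((sc0 R n)(i := f)) v h j \<le> sg R i * dv n k (sc0 R n) v h j"
  by (rule dv_step[OF dev_cv])

declare cv.simps[simp del] F.simps[simp del]

lemma oth_neq[simp]: "oth x \<noteq> x" "x \<noteq> oth x" by (cases x; simp)+
lemma neq_oth: "y \<noteq> x \<Longrightarrow> y = oth x" by (cases x; cases y) auto
lemma neq_oth_iff: "(y \<noteq> oth x) = (y = x)" by (cases x; cases y) auto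
lemma oth_oth[simp]: "oth (oth x) = x" by (cases x) auto

lemma tie_cnt: "tie n v \<longleftrightarrow> cnt n x v = cnt n (oth x) v"
  by (cases x) (auto simp: tie_def na_cnt nb_cnt)

lemma win_cnt: "\<not> tie n v \<Longrightarrow> win n v = x \<longleftrightarrow> cnt n (oth x) v < cnt n x v"
  by (cases x) (auto simp: tie_def win_def na_cnt nb_cnt)

lemma beta_util: "\<not> tie n v \<Longrightarrow>
  util R i (beta_a n v) = real (cnt n (R i) v) / real (cnt n (R i) v + cnt n (oth (R i)) v)"
proof (cases "R i")
  case OA then show ?thesis by (simp add: util_def beta_a_def na_cnt nb_cnt)
next
  case OB
  assume nt: "\<not> tie n v"
  then have "na n v + nb n v > 0" by (auto simp: tie_def)
  then have pos: "real (na n v) + real (nb n v) > 0" by (auto intro: add_pos_nonneg add_nonneg_pos)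
  have "1 - real (na n v) / real (na n v + nb n v) = real (nb n v) / real (nb n v + na n v)"
    using pos by (simp add: field_simps)
  then show ?thesis using OB by (simp add: util_def beta_a_def na_cnt nb_cnt)
qed

lemma cnt_upd_same: "i < n \<Longrightarrow> v i \<noteq> V x \<Longrightarrow> cnt n x (v(i:=V x)) = Suc (cnt n x v)"
proof -
  assume a: "i < n" "v i \<noteq> V x"
  have "{j \<in> {0..<n}. (v(i:=V x)) j = V x} = insert i {j \<in> {0..<n}. v j = V x}"
    using a by auto
  then show ?thesis using a by (simp add: cnt_def)
qed

lemma cnt_upd_oth: "cnt n (oth x) (v(i:=V x)) \<le> cnt n (oth x) v"
  unfolding cnt_def by (rule card_mono) auto

lemma all_vote:
  assumes "\<forall>j<n. R j = x \<longrightarrow> v j = V x"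
  shows "card {j\<in>{0..<n}. R j = x} \<le> cnt n x v \<and> cnt n (oth x) v \<le> n - card {j\<in>{0..<n}. R j = x}"
proof
  show "card {j\<in>{0..<n}. R j = x} \<le> cnt n x v"
    unfolding cnt_def by (rule card_mono) (use assms in auto)
  have "{j\<in>{0..<n}. v j = V (oth x)} \<subseteq> {0..<n} - {j\<in>{0..<n}. R j = x}"
    using assms by auto
  then have "cnt n (oth x) v \<le> card ({0..<n} - {j\<in>{0..<n}. R j = x})"
    unfolding cnt_def by (rule card_mono[rotated]) simp
  also have "\<dots> = n - card {j\<in>{0..<n}. R j = x}"
    by (subst card_Diff_subset) auto
  finally show "cnt n (oth x) v \<le> n - card {j\<in>{0..<n}. R j = x}" .
qed

lemma not_card: "card {j\<in>{0..<n}. R j \<noteq> x} = n - card {j\<in>{0..<n}. R j = x}"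
proof -
  have e: "{j\<in>{0..<n}. R j \<noteq> x} = {0..<n} - {j\<in>{0..<n}. R j = x}" by auto
  have "card ({0..<n} - {j\<in>{0..<n}. R j = x}) = card {0..<n} - card {j\<in>{0..<n}. R j = x}"
    by (rule card_Diff_subset) auto
  then show ?thesis unfolding e by simp
qed

lemma maj_card: "p + 1 \<le> card {j\<in>{0..<2*p+1}. R j = Maj p R}"
proof (cases "p + 1 \<le> card {i \<in> {0..<2*p+1}. R i = OA}")
  case True then show ?thesis by (simp add: Maj_def)
next
  case False
  have "{i \<in> {0..<2*p+1}. R i = OB} = {i \<in> {0..<2*p+1}. R i \<noteq> OA}"
  proof -
    have oe: "\<And>y. (y = OB) = (y \<noteq> OA)" by (case_tac y) auto
    show ?thesis by (simp only: oe)
  qed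
  then have "card {i \<in> {0..<2*p+1}. R i = OB} = 2*p+1 - card {i \<in> {0..<2*p+1}. R i = OA}"
    using not_card[of "2*p+1" R OA] by simp
  then show ?thesis using False by (simp add: Maj_def)
qed

lemma outcome_bounds: "0 \<le> outcome p v sc \<and> outcome p v sc \<le> 1"
  using cv_bounds by (simp add: outcome_def)

lemma valF: "C3 p R sc \<Longrightarrow> \<not> tie (2*p+1) v \<Longrightarrow>
  cv (2*p+1) (p+1) sc v [] = F R (win (2*p+1) v) (winA (2*p+1) v) (beta_a (2*p+1) v) (p+1) {0..<2*p+1}"
proof -
  assume a: "C3 p R sc" "\<not> tie (2*p+1) v"
  have "cv (2*p+1) (p+1) sc v [] = F R (win (2*p+1) v) (winA (2*p+1) v) (beta_a (2*p+1) v) (p+1) ({0..<2*p+1} - set (map fst ([]::(nat \<times> ann) list)))"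
    by (rule cv_SPE[OF a]) simp_all
  then show ?thesis by simp
qed

lemma valM:
  assumes "C3 p R sc" "\<not> tie (2*p+1) v" "win (2*p+1) v = Maj p R"
  shows "outcome p v sc = deg (Maj p R)"
proof -
  have "card {j\<in>{0..<2*p+1}. R j \<noteq> Maj p R} < p + 1"
    using maj_card[of p R] not_card[of "2*p+1" R "Maj p R"] by simp
  then have "F R (win (2*p+1) v) (winA (2*p+1) v) (beta_a (2*p+1) v) (p+1) {0..<2*p+1} = winA (2*p+1) v"
    using assms(3) by (intro F_forced) auto
  then show ?thesis using valF[OF assms(1,2)] assms winA_deg by (simp add: outcome_def)
qed

definition BB :: "nat \<Rightarrow> (nat \<Rightarrow> opt) \<Rightarrow> real" where
  "BB p R = F R (oth (Maj p R)) 0 1 (p+1) {0..<2*p+1}"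

lemma BB_bounds: "0 < BB p R \<and> BB p R \<le> 1"
proof
  have "{j\<in>{0..<2*p+1}. R j \<noteq> oth (Maj p R)} = {j\<in>{0..<2*p+1}. R j = Maj p R}"
    by (simp add: neq_oth_iff)
  then show "0 < BB p R" unfolding BB_def using maj_card[of p R] by (intro F_pos) auto
  show "BB p R \<le> 1" unfolding BB_def using F_bounds[of 0 1 "{0..<2*p+1}"] by simp
qed

lemma valL:
  assumes "C3 p R sc" "\<not> tie (2*p+1) v" "win (2*p+1) v = oth (Maj p R)" "R i = Maj p R"
  shows "util R i (outcome p v sc) = BB p R * util R i (beta_a (2*p+1) v)"
proof -
  let ?L = "oth (Maj p R)" and ?S = "{0..<2*p+1}"
  define A where "A = F R ?L 1 0 (p+1) ?S"
  have F11: "F R ?L 1 1 (p+1) ?S = 1" by (rule F_const) simp_all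
  have "F R ?L 1 1 (p+1) ?S = 1 * A + 1 * BB p R"
    unfolding A_def BB_def by (rule F_affine)
  then have AB: "A + BB p R = 1" using F11 by simp
  have "outcome p v sc = cv (2*p+1) (p+1) sc v []" using assms(2) by (simp add: outcome_def)
  also have "\<dots> = F R ?L (winA (2*p+1) v) (beta_a (2*p+1) v) (p+1) ?S"
    using valF[OF assms(1,2)] assms(3) by simp
  also have "\<dots> = winA (2*p+1) v * A + beta_a (2*p+1) v * BB p R"
    unfolding A_def BB_def by (rule F_affine)
  finally have o: "outcome p v sc = winA (2*p+1) v * A + beta_a (2*p+1) v * BB p R" .
  show ?thesis
  proof (cases "Maj p R")
    case OA
    have w0: "winA (2*p+1) v = 0" using assms(3) OA by (simp add: winA_deg deg_def)
    have "outcome p v sc = beta_a (2*p+1) v * BB p R" using o w0 by simp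
    then show ?thesis using OA assms(4) by (simp add: util_def)
  next
    case OB
    have w1: "winA (2*p+1) v = 1" using assms(3) OB by (simp add: winA_deg deg_def)
    have "outcome p v sc = A + beta_a (2*p+1) v * BB p R" using o w1 by simp
    then have "1 - outcome p v sc = BB p R * (1 - beta_a (2*p+1) v)" using AB by (simp add: algebra_simps)
    then show ?thesis using OB assms(4) by (simp add: util_def)
  qed
qed

lemma ratio_lt: "(c::nat) < d \<Longrightarrow> d' \<le> d \<Longrightarrow> real c / real (c + d) < real (c + 1) / real (c + 1 + d')"
proof -
  assume a: "c < d" "d' \<le> d"
  have "real c * real (c + 1 + d') < real (c + 1) * real (c + d)"
  proof -
    have "real c * real (c + 1 + d') \<le> real c * real (c + 1 + d)"
      by (rule mult_left_mono) (use a in auto)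
    also have "\<dots> < real (c + 1) * real (c + d)"
      using a by (simp add: algebra_simps)
    finally show ?thesis .
  qed
  note X = this
  have bpos: "0 < real (c + d)" and dpos: "0 < real (c + 1 + d')" using a by auto
  have e: "real (c + 1) / real (c + 1 + d') * real (c + d) = real (c + 1) * real (c + d) / real (c + 1 + d')"
    by simp
  have "real c < real (c + 1) * real (c + d) / real (c + 1 + d')"
    by (subst pos_less_divide_eq[OF dpos]) (rule X)
  then have "real c < real (c + 1) / real (c + 1 + d') * real (c + d)" unfolding e .
  then show ?thesis by (subst pos_divide_less_eq[OF bpos])
qed

lemma allM:
  assumes "\<forall>j<2*p+1. R j = Maj p R \<longrightarrow> v j = V (Maj p R)"
  shows "\<not> tie (2*p+1) v \<and> win (2*p+1) v = Maj p R"
proof -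
  have a: "card {j\<in>{0..<2*p+1}. R j = Maj p R} \<le> cnt (2*p+1) (Maj p R) v"
      "cnt (2*p+1) (oth (Maj p R)) v \<le> 2*p+1 - card {j\<in>{0..<2*p+1}. R j = Maj p R}"
    using all_vote[OF assms] by auto
  have m: "p + 1 \<le> card {j\<in>{0..<2*p+1}. R j = Maj p R}" by (rule maj_card)
  have lt: "cnt (2*p+1) (oth (Maj p R)) v < cnt (2*p+1) (Maj p R) v" using a m by linarith
  have nt: "\<not> tie (2*p+1) v" using lt tie_cnt[of "2*p+1" v "Maj p R"] by simp
  then show ?thesis using win_cnt[OF nt, of "Maj p R"] lt by simp
qed

lemma half_lt: "(c::nat) < d \<Longrightarrow> real c / real (c + d) < 1/2"
proof -
  assume a: "c < d"
  have pos: "0 < real (c + d)" using a by simp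
  have "real c < 1/2 * real (c + d)" using a by simp
  then show ?thesis by (subst pos_divide_less_eq[OF pos])
qed

lemma part1:
  assumes spe: "SPE p R sv sc"
  shows "outcome p sv sc = deg (Maj p R)"
proof -
  let ?n = "2*p+1" and ?M = "Maj p R"
  let ?L = "oth ?M"
  have c3: "C3 p R sc" using conjunct2[OF conjunct2[OF spe[unfolded SPE_def]]] unfolding C3_def .
  have c1: "\<forall>i<2*p+1. \<forall>x sc'. \<not> util R i (outcome p (sv(i:=x)) (sc(i:=sc'))) > util R i (outcome p sv sc)"
    using conjunct1[OF spe[unfolded SPE_def]] .
  have dev: "\<not> util R i (outcome p (sv(i:=x)) sc) > util R i (outcome p sv sc)" if "i < ?n" for i x
    using c1[rule_format, OF that, of x "sc i"] by simp
  have mM: "p + 1 \<le> card {j\<in>{0..<?n}. R j = ?M}" by (rule maj_card)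
  show ?thesis
  proof (rule ccontr)
    assume neq: "outcome p sv sc \<noteq> deg ?M"
    have notM: "tie ?n sv \<or> win ?n sv = ?L"
    proof (cases "tie ?n sv")
      case False
      have "win ?n sv \<noteq> ?M" using valM[OF c3 False] neq by blast
      then show ?thesis using neq_oth by blast
    qed simp
    have "\<exists>i<?n. R i = ?M \<and> sv i \<noteq> V ?M"
    proof (rule ccontr)
      assume "\<not> (\<exists>i<?n. R i = ?M \<and> sv i \<noteq> V ?M)"
      then have "\<forall>j<?n. R j = ?M \<longrightarrow> sv j = V ?M" by blast
      then have "\<not> tie ?n sv \<and> win ?n sv = ?M" by (rule allM)
      then show False using notM by simp
    qed
    then obtain i where i: "i < ?n" "R i = ?M" "sv i \<noteq> V ?M" by blast
    define v' where "v' = sv(i := V ?M)"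
    have cM: "cnt ?n ?M v' = Suc (cnt ?n ?M sv)" unfolding v'_def by (rule cnt_upd_same[of i "2*p+1" sv "Maj p R", OF i(1) i(3)])
    have cL: "cnt ?n ?L v' \<le> cnt ?n ?L sv" unfolding v'_def by (rule cnt_upd_oth)
    have dv: "\<not> util R i (outcome p v' sc) > util R i (outcome p sv sc)"
      unfolding v'_def by (rule dev[OF i(1)])
    have uM: "util R i (deg ?M) = 1" using util_deg_same[of R i] i(2) by simp
    have uh: "util R i (1/2) = 1/2" by (simp add: util_def)
    show False
    proof (cases "tie ?n sv")
      case True
      then have eq: "cnt ?n ?M sv = cnt ?n ?L sv" using tie_cnt by blast
      have lt': "cnt ?n ?L v' < cnt ?n ?M v'" using cM cL eq by linarith
      have nt': "\<not> tie ?n v'" using lt' tie_cnt[of ?n v' ?M] by simp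
      have "win ?n v' = ?M" using win_cnt[OF nt', of ?M] lt' by simp
      then have "outcome p v' sc = deg ?M" by (rule valM[OF c3 nt'])
      then have u1: "util R i (outcome p v' sc) = 1" using uM by simp
      have o2: "outcome p sv sc = 1/2" using True by (simp add: outcome_def)
      have u2: "util R i (outcome p sv sc) = 1/2" by (subst o2) (rule uh)
      show False using dv u1 u2 by linarith
    next
      case False
      then have wL: "win ?n sv = ?L" using notM by simp
      have lt: "cnt ?n ?M sv < cnt ?n ?L sv" using win_cnt[OF False, of ?L] wL by simp
      let ?r = "real (cnt ?n ?M sv) / real (cnt ?n ?M sv + cnt ?n ?L sv)"
      have uo: "util R i (outcome p sv sc) = BB p R * ?r"
        using valL[OF c3 False wL i(2)] beta_util[OF False, of R i] i(2) by simp
      have half: "?r < 1/2" by (rule half_lt[OF lt])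
      have r0: "0 \<le> ?r" by simp
      have Bb: "0 < BB p R" "BB p R \<le> 1" using BB_bounds by auto
      have "BB p R * ?r \<le> 1 * ?r" by (rule mult_right_mono[OF Bb(2) r0])
      then have ult: "util R i (outcome p sv sc) < 1/2" using uo half by linarith
      show False
      proof (cases "tie ?n v'")
        case True
        then have o2: "outcome p v' sc = 1/2" by (simp add: outcome_def)
        have u2: "util R i (outcome p v' sc) = 1/2" by (subst o2) (rule uh)
        show False using dv u2 ult by linarith
      next
        case nt': False
        show False
        proof (cases "win ?n v' = ?M")
          case True
          then have "outcome p v' sc = deg ?M" by (rule valM[OF c3 nt'])
          then have "util R i (outcome p v' sc) = 1" using uM by simp
          then show False using dv ult by linarith
        next
          case False
          then have wL': "win ?n v' = ?L" using neq_oth by blast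
          have uo': "util R i (outcome p v' sc) = BB p R * (real (cnt ?n ?M v') / real (cnt ?n ?M v' + cnt ?n ?L v'))"
            using valL[OF c3 nt' wL' i(2)] beta_util[OF nt', of R i] i(2) by simp
          have "?r < real (cnt ?n ?M sv + 1) / real (cnt ?n ?M sv + 1 + cnt ?n ?L v')"
            by (rule ratio_lt[OF lt cL])
          then have "?r < real (cnt ?n ?M v') / real (cnt ?n ?M v' + cnt ?n ?L v')" using cM by simp
          then have "BB p R * ?r < BB p R * (real (cnt ?n ?M v') / real (cnt ?n ?M v' + cnt ?n ?L v'))"
            by (rule mult_strict_left_mono[OF _ Bb(1)])
          then show False using dv uo uo' by linarith
        qed
      qed
    qed
  qed
qed

lemma part2: "SPE p R (\<lambda>j. V (R j)) (sc0 R (2*p+1)) \<and> outcome p (\<lambda>j. V (R j)) (sc0 R (2*p+1)) = deg (Maj p R)"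
proof -
  let ?n = "2*p+1" and ?M = "Maj p R" and ?sv = "\<lambda>j. V (R j)" and ?sc = "sc0 R (2*p+1)"
  have cl2: "\<forall>v h i sc'. \<not> tie ?n v \<longrightarrow> valid_hist p h \<longrightarrow> i < ?n \<longrightarrow>
        \<not> util R i (cv ?n (p + 1 - length h) (?sc(i := sc')) v h) > util R i (cv ?n (p + 1 - length h) ?sc v h)"
  proof (intro allI impI)
    fix v h i sc'
    have "util R i (cv ?n (p + 1 - length h) (?sc(i := sc')) v h) \<le> util R i (cv ?n (p + 1 - length h) ?sc v h)"
      by (subst util_sg) (rule dev_cv)
    then show "\<not> util R i (cv ?n (p + 1 - length h) (?sc(i := sc')) v h) > util R i (cv ?n (p + 1 - length h) ?sc v h)"
      by simp
  qed
  have cl3: "\<forall>v h j i sc'. \<not> tie ?n v \<longrightarrow> valid_hist p h \<longrightarrow> j < ?n \<longrightarrow>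
        j \<notin> set (map fst h) \<longrightarrow> i < ?n \<longrightarrow>
        \<not> util R i (dv ?n (p - length h) (?sc(i := sc')) v h j) > util R i (dv ?n (p - length h) ?sc v h j)"
  proof (intro allI impI)
    fix v h j i sc'
    have "util R i (dv ?n (p - length h) (?sc(i := sc')) v h j) \<le> util R i (dv ?n (p - length h) ?sc v h j)"
      by (subst util_sg) (rule dev_dv)
    then show "\<not> util R i (dv ?n (p - length h) (?sc(i := sc')) v h j) > util R i (dv ?n (p - length h) ?sc v h j)"
      by simp
  qed
  have c3: "C3 p R ?sc" unfolding C3_def by (rule cl3)
  have allsv: "\<forall>j<?n. R j = ?M \<longrightarrow> ?sv j = V ?M" by simp
  have o0: "outcome p ?sv ?sc = deg ?M"
    using allM[OF allsv] valM[OF c3] by blast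
  have cl1: "\<forall>i<?n. \<forall>x sc'. \<not> util R i (outcome p (?sv(i:=x)) (?sc(i:=sc'))) > util R i (outcome p ?sv ?sc)"
  proof (intro allI impI)
    fix i x sc' assume i: "i < ?n"
    show "\<not> util R i (outcome p (?sv(i:=x)) (?sc(i:=sc'))) > util R i (outcome p ?sv ?sc)"
    proof (cases "R i = ?M")
      case True
      have "util R i (outcome p ?sv ?sc) = 1" using o0 True util_deg_same[of R i] by simp
      moreover have "util R i (outcome p (?sv(i:=x)) (?sc(i:=sc'))) \<le> 1"
        using util_bounds outcome_bounds by blast
      ultimately show ?thesis by simp
    next
      case False
      define v' where "v' = ?sv(i:=x)"
      have "\<forall>j<?n. R j = ?M \<longrightarrow> v' j = V ?M" using False by (auto simp: v'_def)
      then have w: "\<not> tie ?n v' \<and> win ?n v' = ?M" by (rule allM)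
      have "util R i (cv ?n (p+1) (?sc(i:=sc')) v' []) \<le> util R i (cv ?n (p+1) ?sc v' [])"
        by (subst util_sg) (rule dev_cv)
      moreover have "cv ?n (p+1) ?sc v' [] = deg ?M"
        using valM[OF c3, of v'] w by (simp add: outcome_def)
      ultimately have "util R i (outcome p v' (?sc(i:=sc'))) \<le> util R i (outcome p ?sv ?sc)"
        using w o0 by (simp add: outcome_def)
      then show ?thesis unfolding v'_def by simp
    qed
  qed
  have "SPE p R ?sv ?sc" unfolding SPE_def using cl1 cl2 cl3 by blast
  then show ?thesis using o0 by blast
qed

theorem proposition4:
  fixes p :: nat and R :: "nat \<Rightarrow> opt"
  shows "(\<forall>sv sc. SPE p R sv sc \<longrightarrow> outcome p sv sc = deg (Maj p R))
       \<and> (\<exists>sv sc. SPE p R sv sc \<and> outcome p sv sc = deg (Maj p R))"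
  using part1 part2 by blast

end
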